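(* Let $L,N$ be finite simplicial complexes, $\varphi: L\to N$ a surjective simplicial finite-fibration and $n\ge2$. Then $\mathrm{TC}_n(\varphi)\le\min\{\mathrm{TC}_n(L),\mathrm{TC}_n(N)\}$.
   Context: Simplicial complexes are abstract and edge-path connected; $K^n$ is the $n$-fold categorical product (vertex set $\mathrm{VX}(K)^n$; a set of vertices is a simplex iff each coordinate projection is a simplex). Simplicial maps $f,g: K\to K'$ are contiguous if $f(\sigma)\cup g(\sigma)$ is a simplex for every simplex $\sigma$; $f\sim g$ if joined by a finite chain of contiguous simplicial maps. $\mathrm{SD}(\varphi_1,\dots,\varphi_m)$ for simplicial maps $K\to K'$ is the least $k\ge0$ such that $K$ is a union of subcomplexes $K_0,\dots,K_k$ with $\varphi_i|_{K_j}\sim\varphi_l|_{K_j}$ for all $i,l,j$. With $p_i: K^n\to K$ the projections, $\mathrm{TC}_n(K)=\mathrm{SD}(p_1,\dots,p_n)$, and for surjective $\varphi: L\to N$, $\mathrm{TC}_n(\varphi)=\mathrm{SD}(\varphi\circ p_1,\dots,\varphi\circ p_n)$ with $p_i: L^n\to L$. $I_m$ is the complex with vertices $0,\dots,m$ and edges $\{i,i+1\}$; $\varphi: L\to N$ is a simplicial finite-fibration if for every finite complex $M$, $m\ge1$, inclusion $i: M\times\{0\}\to M\times I_m$ and simplicial $g: M\times\{0\}\to L$, $G: M\times I_m\to N$ with $\varphi\circ g=G\circ i$, there is simplicial $\widetilde G: M\times I_m\to L$ with $\widetilde G\circ i=g$, $\varphi\circ\widetilde G=G$. *)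

theory Defs
  imports Main
begin

definition simplicial_complex :: "'a set set \<Rightarrow> bool" where
  "simplicial_complex K \<longleftrightarrow>
     (\<forall>\<sigma>\<in>K. finite \<sigma> \<and> \<sigma> \<noteq> {}) \<and>
     (\<forall>\<sigma>\<in>K. \<forall>\<tau>. \<tau> \<subseteq> \<sigma> \<and> \<tau> \<noteq> {} \<longrightarrow> \<tau> \<in> K)"

definition vertices :: "'a set set \<Rightarrow> 'a set" where
  "vertices K = \<Union>K"

definition edge_path_connected :: "'a set set \<Rightarrow> bool" where
  "edge_path_connected K \<longleftrightarrow>
     (\<forall>u\<in>vertices K. \<forall>v\<in>vertices K. (\<lambda>x y. {x, y} \<in> K)\<^sup>*\<^sup>* u v)"

definition complex :: "'a set set \<Rightarrow> bool" where
  "complex K \<longleftrightarrow> simplicial_complex K \<and> edge_path_connected K"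

definition simplicial_map :: "'a set set \<Rightarrow> 'b set set \<Rightarrow> ('a \<Rightarrow> 'b) \<Rightarrow> bool" where
  "simplicial_map K K' f \<longleftrightarrow> (\<forall>\<sigma>\<in>K. f ` \<sigma> \<in> K')"

definition contiguous :: "'a set set \<Rightarrow> 'b set set \<Rightarrow> ('a \<Rightarrow> 'b) \<Rightarrow> ('a \<Rightarrow> 'b) \<Rightarrow> bool" where
  "contiguous K K' f g \<longleftrightarrow> simplicial_map K K' f \<and> simplicial_map K K' g \<and>
     (\<forall>\<sigma>\<in>K. f ` \<sigma> \<union> g ` \<sigma> \<in> K')"

definition contiguity_class :: "'a set set \<Rightarrow> 'b set set \<Rightarrow> ('a \<Rightarrow> 'b) \<Rightarrow> ('a \<Rightarrow> 'b) \<Rightarrow> bool" where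
  "contiguity_class K K' f g \<longleftrightarrow> simplicial_map K K' f \<and> (contiguous K K')\<^sup>*\<^sup>* f g"

definition subcomplex :: "'a set set \<Rightarrow> 'a set set \<Rightarrow> bool" where
  "subcomplex A K \<longleftrightarrow> A \<subseteq> K \<and> simplicial_complex A"

definition SD :: "'a set set \<Rightarrow> 'b set set \<Rightarrow> ('a \<Rightarrow> 'b) list \<Rightarrow> nat" where
  "SD K K' fs = (LEAST k. \<exists>C :: nat \<Rightarrow> 'a set set.
      (\<forall>j\<le>k. subcomplex (C j) K) \<and> (\<Union>j\<le>k. C j) = K \<and>
      (\<forall>j\<le>k. \<forall>i<length fs. \<forall>l<length fs. contiguity_class (C j) K' (fs ! i) (fs ! l)))"

text \<open>Categorical n-fold product K^n; vertices are lists of length n.\<close>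
definition power_complex :: "'a set set \<Rightarrow> nat \<Rightarrow> 'a list set set" where
  "power_complex K n = {\<sigma>. \<sigma> \<noteq> {} \<and> finite \<sigma> \<and> (\<forall>x\<in>\<sigma>. length x = n) \<and>
      (\<forall>i<n. (\<lambda>x. x ! i) ` \<sigma> \<in> K)}"

definition prod_complex :: "'a set set \<Rightarrow> 'b set set \<Rightarrow> ('a \<times> 'b) set set" where
  "prod_complex M P = {\<sigma>. \<sigma> \<noteq> {} \<and> finite \<sigma> \<and> fst ` \<sigma> \<in> M \<and> snd ` \<sigma> \<in> P}"

definition TC :: "nat \<Rightarrow> 'a set set \<Rightarrow> nat" where
  "TC n K = SD (power_complex K n) K (map (\<lambda>i x. x ! i) [0..<n])"

definition TC_map :: "nat \<Rightarrow> 'a set set \<Rightarrow> 'b set set \<Rightarrow> ('a \<Rightarrow> 'b) \<Rightarrow> nat" where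
  "TC_map n L N \<phi> = SD (power_complex L n) N (map (\<lambda>i x. \<phi> (x ! i)) [0..<n])"

definition interval_complex :: "nat \<Rightarrow> nat set set" where
  "interval_complex m = {{i} | i. i \<le> m} \<union> {{i, Suc i} | i. i < m}"

text \<open>Finite test complexes M are taken with vertices in nat
  (every finite complex is isomorphic to one of these). M \<times> {0} is the product with the
  one-vertex complex {{0}}; the inclusion into M \<times> I_m is the identity on vertices.\<close>
definition finite_fibration :: "'a set set \<Rightarrow> 'b set set \<Rightarrow> ('a \<Rightarrow> 'b) \<Rightarrow> bool" where
  "finite_fibration L N \<phi> \<longleftrightarrow> simplicial_map L N \<phi> \<and>
     (\<forall>(M :: nat set set) m g G.
        simplicial_complex M \<and> finite M \<and> m \<ge> 1 \<and>
        simplicial_map (prod_complex M {{0}}) L g \<and>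
        simplicial_map (prod_complex M (interval_complex m)) N G \<and>
        (\<forall>v\<in>vertices (prod_complex M {{0}}). \<phi> (g v) = G v)
        \<longrightarrow> (\<exists>Gt. simplicial_map (prod_complex M (interval_complex m)) L Gt \<and>
               (\<forall>v\<in>vertices (prod_complex M {{0}}). Gt v = g v) \<and>
               (\<forall>v\<in>vertices (prod_complex M (interval_complex m)). \<phi> (Gt v) = G v)))"

end

theory Submission
  imports Defs
begin

definition cover_ok :: "'a set set \<Rightarrow> 'b set set \<Rightarrow> ('a \<Rightarrow> 'b) list \<Rightarrow> nat \<Rightarrow> (nat \<Rightarrow> 'a set set) \<Rightarrow> bool" where
  "cover_ok K K' fs k C \<longleftrightarrow> (\<forall>j\<le>k. subcomplex (C j) K) \<and> (\<Union>j\<le>k. C j) = K \<and>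
      (\<forall>j\<le>k. \<forall>i<length fs. \<forall>l<length fs. contiguity_class (C j) K' (fs ! i) (fs ! l))"

lemma SD_alt: "SD K K' fs = (LEAST k. \<exists>C. cover_ok K K' fs k C)"
  unfolding SD_def cover_ok_def by simp

lemma SD_le: "cover_ok K K' fs k C \<Longrightarrow> SD K K' fs \<le> k"
  unfolding SD_alt by (rule Least_le) blast

lemma SD_wit: assumes "\<exists>k C. cover_ok K K' fs k C" shows "\<exists>C. cover_ok K K' fs (SD K K' fs) C"
  unfolding SD_alt by (rule LeastI_ex[OF assms])

lemma contiguous_sym: "contiguous K K' f g \<Longrightarrow> contiguous K K' g f"
  unfolding contiguous_def by (simp add: Un_commute)

lemma comp_left_contig:
  assumes "contiguous C L f g" "simplicial_map L N \<phi>"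
  shows "contiguous C N (\<phi> \<circ> f) (\<phi> \<circ> g)"
  using assms unfolding contiguous_def simplicial_map_def image_comp[symmetric] image_Un[symmetric]
  by blast

lemma comp_left_cc:
  assumes "contiguity_class C L f g" "simplicial_map L N \<phi>"
  shows "contiguity_class C N (\<phi> \<circ> f) (\<phi> \<circ> g)"
proof -
  have "(contiguous C L)\<^sup>*\<^sup>* f g" using assms(1) unfolding contiguity_class_def by simp
  then have "(contiguous C N)\<^sup>*\<^sup>* (\<phi> \<circ> f) (\<phi> \<circ> g)"
  proof (induction rule: rtranclp_induct)
    case base then show ?case by simp
  next
    case (step y z)
    then show ?case using comp_left_contig[OF step(2) assms(2)]
      by (meson rtranclp.rtrancl_into_rtrancl)
  qed
  moreover have "simplicial_map C N (\<phi> \<circ> f)"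
    using assms unfolding contiguity_class_def simplicial_map_def unfolding image_comp[symmetric] by blast
  ultimately show ?thesis unfolding contiguity_class_def by simp
qed

lemma comp_right_contig:
  assumes "contiguous A K' f g" "simplicial_map B A h"
  shows "contiguous B K' (f \<circ> h) (g \<circ> h)"
  using assms unfolding contiguous_def simplicial_map_def
  unfolding image_comp[symmetric] by blast

lemma agree_contig:
  assumes "simplicial_map B K' f" "\<forall>v\<in>vertices B. f v = f' v"
  shows "contiguous B K' f f'"
proof -
  have e: "f' ` \<sigma> = f ` \<sigma>" if "\<sigma> \<in> B" for \<sigma>
    using assms(2) that unfolding vertices_def by (auto intro!: image_cong)
  show ?thesis using assms(1) e unfolding contiguous_def simplicial_map_def by auto
qed

lemma comp_right_cc:
  assumes "contiguity_class A K' f g" "simplicial_map B A h"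
    and "\<forall>v\<in>vertices B. f' v = f (h v)" and "\<forall>v\<in>vertices B. g' v = g (h v)"
  shows "contiguity_class B K' f' g'"
proof -
  have "(contiguous A K')\<^sup>*\<^sup>* f g" using assms(1) unfolding contiguity_class_def by simp
  then have ch: "(contiguous B K')\<^sup>*\<^sup>* (f \<circ> h) (g \<circ> h)"
  proof (induction rule: rtranclp_induct)
    case base then show ?case by simp
  next
    case (step y z)
    then show ?case using comp_right_contig[OF step(2) assms(2)]
      by (meson rtranclp.rtrancl_into_rtrancl)
  qed
  have sf: "simplicial_map B K' (f \<circ> h)"
    using assms(1,2) unfolding contiguity_class_def simplicial_map_def unfolding image_comp[symmetric] by blast
  have sg: "simplicial_map B K' (g \<circ> h)"
  proof (cases "f = g")
    case True then show ?thesis using sf by simp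
  next
    case False
    then obtain y where "(contiguous A K')\<^sup>*\<^sup>* f y" "contiguous A K' y g"
      using \<open>(contiguous A K')\<^sup>*\<^sup>* f g\<close> by (metis rtranclp.cases)
    then have "simplicial_map A K' g" unfolding contiguous_def by simp
    then show ?thesis using assms(2) unfolding simplicial_map_def unfolding image_comp[symmetric] by blast
  qed
  have c1: "contiguous B K' f' (f \<circ> h)"
    by (rule contiguous_sym, rule agree_contig[OF sf]) (use assms(3) in simp)
  have c2: "contiguous B K' (g \<circ> h) g'"
    by (rule agree_contig[OF sg]) (use assms(4) in simp)
  have "(contiguous B K')\<^sup>*\<^sup>* f' g'"
    using c1 ch c2 by (meson converse_rtranclp_into_rtranclp rtranclp.rtrancl_into_rtrancl)
  moreover have "simplicial_map B K' f'" using c1 unfolding contiguous_def by simp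
  ultimately show ?thesis unfolding contiguity_class_def by simp
qed

definition faces :: "'a set \<Rightarrow> 'a set set" where
  "faces \<sigma> = {\<tau>. \<tau> \<subseteq> \<sigma> \<and> \<tau> \<noteq> {}}"

lemma sc_face: "simplicial_complex K \<Longrightarrow> \<sigma> \<in> K \<Longrightarrow> \<tau> \<subseteq> \<sigma> \<Longrightarrow> \<tau> \<noteq> {} \<Longrightarrow> \<tau> \<in> K"
  unfolding simplicial_complex_def by blast

lemma const_contig:
  assumes "{y, z} \<in> K'" "simplicial_complex K'" "\<forall>\<sigma>\<in>S. \<sigma> \<noteq> {}"
  shows "contiguous S K' (\<lambda>_. y) (\<lambda>_. z)"
proof -
  have s1: "{y} \<subseteq> {y,z}" "{z} \<subseteq> {y,z}" by blast+
  have y: "{y} \<in> K'" "{z} \<in> K'" using assms(1,2) s1 unfolding simplicial_complex_def by blast+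
  have i: "(\<lambda>_. c) ` \<sigma> = {c}" if "\<sigma> \<in> S" for \<sigma> and c :: 'b
    using assms(3) that by auto
  have u: "{y} \<union> {z} = {y, z}" by auto
  show ?thesis unfolding contiguous_def simplicial_map_def
  proof (intro conjI ballI)
    fix \<sigma> assume "\<sigma> \<in> S"
    then have e: "(\<lambda>_. y) ` \<sigma> = {y}" "(\<lambda>_. z) ` \<sigma> = {z}" using i by blast+
    show "(\<lambda>_. y) ` \<sigma> \<in> K'" "(\<lambda>_. z) ` \<sigma> \<in> K'"
      "(\<lambda>_. y) ` \<sigma> \<union> (\<lambda>_. z) ` \<sigma> \<in> K'" unfolding e u using y assms(1) by blast+
  qed
qed

lemma const_path:
  assumes "(\<lambda>x y. {x, y} \<in> K')\<^sup>*\<^sup>* u w" "simplicial_complex K'" "\<forall>\<sigma>\<in>S. \<sigma> \<noteq> {}"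
  shows "(contiguous S K')\<^sup>*\<^sup>* (\<lambda>_. u) (\<lambda>_. w)"
  using assms(1)
proof (induction rule: rtranclp_induct)
  case base then show ?case by simp
next
  case (step y z)
  then show ?case using const_contig[OF step(2) assms(2,3)]
    by (meson rtranclp.rtrancl_into_rtrancl)
qed

lemma faces_cc:
  assumes "complex K'" "\<sigma> \<noteq> {}" "finite \<sigma>"
    and f: "simplicial_map (faces \<sigma>) K' f" and g: "simplicial_map (faces \<sigma>) K' g"
  shows "contiguity_class (faces \<sigma>) K' f g"
proof -
  have sc: "simplicial_complex K'" using assms(1) unfolding complex_def by simp
  have ne: "\<forall>\<tau>\<in>faces \<sigma>. \<tau> \<noteq> {}" unfolding faces_def by simp
  obtain v where v: "v \<in> \<sigma>" using assms(2) by blast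
  have s: "\<sigma> \<in> faces \<sigma>" using assms(2) unfolding faces_def by simp
  have fs: "f ` \<sigma> \<in> K'" "g ` \<sigma> \<in> K'" using f g s unfolding simplicial_map_def by auto
  have toconst: "contiguous (faces \<sigma>) K' h (\<lambda>_. h v)" if h: "simplicial_map (faces \<sigma>) K' h" "h ` \<sigma> \<in> K'" for h
  proof -
    have "{h v} \<subseteq> h ` \<sigma>" using v by blast
    then have "{h v} \<in> K'" using h(2) sc sc_face by blast
    moreover have "(\<lambda>_. h v) ` \<tau> = {h v}" if "\<tau> \<in> faces \<sigma>" for \<tau> using ne that by auto
    moreover have "h ` \<tau> \<union> {h v} \<in> K'" if "\<tau> \<in> faces \<sigma>" for \<tau>
    proof -
      have "h ` \<tau> \<union> {h v} \<subseteq> h ` \<sigma>" using that v unfolding faces_def by auto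
      then show ?thesis using h(2) sc sc_face by blast
    qed
    ultimately show ?thesis using h(1) unfolding contiguous_def simplicial_map_def by simp
  qed
  have "f v \<in> vertices K'" "g v \<in> vertices K'" using fs v unfolding vertices_def by auto
  then have p: "(\<lambda>x y. {x, y} \<in> K')\<^sup>*\<^sup>* (f v) (g v)"
    using assms(1) unfolding complex_def edge_path_connected_def by blast
  have "(contiguous (faces \<sigma>) K')\<^sup>*\<^sup>* f g"
  proof -
    have a: "contiguous (faces \<sigma>) K' f (\<lambda>_. f v)" using toconst f fs by simp
    have b: "contiguous (faces \<sigma>) K' (\<lambda>_. g v) g" using toconst[OF g fs(2)] contiguous_sym by blast
    have c: "(contiguous (faces \<sigma>) K')\<^sup>*\<^sup>* (\<lambda>_. f v) (\<lambda>_. g v)" using const_path[OF p sc ne] .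
    show ?thesis using a b c by (meson converse_rtranclp_into_rtranclp rtranclp.rtrancl_into_rtrancl)
  qed
  then show ?thesis using f unfolding contiguity_class_def by simp
qed

lemma cover_exists:
  assumes "simplicial_complex K" "finite K" "complex K'"
    and "\<forall>f\<in>set fs. simplicial_map K K' f"
  shows "\<exists>k C. cover_ok K K' fs k C"
proof (cases "K = {}")
  case True
  have "contiguity_class K K' f g" for f g
    unfolding contiguity_class_def simplicial_map_def
    by (rule conjI, simp add: True, rule r_into_rtranclp, simp add: contiguous_def simplicial_map_def True)
  moreover have "subcomplex K K" unfolding subcomplex_def using assms(1) by simp
  ultimately have "cover_ok K K' fs 0 (\<lambda>_. K)"
    unfolding cover_ok_def by simp
  then show ?thesis by blast
next
  case False
  obtain xs where xs: "set xs = K" using finite_list[OF assms(2)] by blast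
  define k where "k = length xs - 1"
  define C where "C j = faces (xs ! j)" for j
  have xne: "xs \<noteq> []" using False xs by auto
  have len: "j \<le> k \<longleftrightarrow> j < length xs" for j using xne unfolding k_def by (cases xs) auto
  have inK: "j \<le> k \<Longrightarrow> xs ! j \<in> K" for j using len xs by (metis nth_mem)
  have sub: "subcomplex (C j) K" if "j \<le> k" for j
  proof -
    have "C j \<subseteq> K" using sc_face[OF assms(1) inK[OF that]] unfolding C_def faces_def by blast
    moreover have "finite (xs ! j)" using inK[OF that] assms(1) unfolding simplicial_complex_def by blast
    then have "simplicial_complex (C j)"
      unfolding C_def faces_def simplicial_complex_def
      by (auto intro: finite_subset)
    ultimately show ?thesis unfolding subcomplex_def by simp
  qed
  have un: "(\<Union>j\<le>k. C j) = K"
  proof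
    show "(\<Union>j\<le>k. C j) \<subseteq> K" using sub unfolding subcomplex_def by blast
  next
    show "K \<subseteq> (\<Union>j\<le>k. C j)"
    proof
      fix \<sigma> assume "\<sigma> \<in> K"
      then obtain j where "j < length xs" "xs ! j = \<sigma>" using xs by (metis in_set_conv_nth)
      moreover have "\<sigma> \<noteq> {}" using \<open>\<sigma> \<in> K\<close> assms(1) unfolding simplicial_complex_def by blast
      ultimately show "\<sigma> \<in> (\<Union>j\<le>k. C j)" using len unfolding C_def faces_def by auto
    qed
  qed
  have cc: "contiguity_class (C j) K' (fs ! i) (fs ! l)" if "j \<le> k" "i < length fs" "l < length fs" for i j l
  proof -
    have s: "xs ! j \<noteq> {}" "finite (xs ! j)" using inK[OF that(1)] assms(1) unfolding simplicial_complex_def by auto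
    have "C j \<subseteq> K" using sub[OF that(1)] unfolding subcomplex_def by simp
    then have "simplicial_map (C j) K' (fs ! i)" "simplicial_map (C j) K' (fs ! l)"
      using assms(4) that(2,3) unfolding simplicial_map_def by (meson nth_mem subsetD)+
    then show ?thesis using faces_cc[OF assms(3) s] unfolding C_def by simp
  qed
  have "cover_ok K K' fs k C" unfolding cover_ok_def using sub un cc by blast
  then show ?thesis by blast
qed

lemma power_sc:
  assumes K: "simplicial_complex K" shows "simplicial_complex (power_complex K n)"
  unfolding simplicial_complex_def
proof (intro conjI ballI allI impI)
  fix \<sigma> assume "\<sigma> \<in> power_complex K n"
  then show "finite \<sigma>" "\<sigma> \<noteq> {}" unfolding power_complex_def by auto
next
  fix \<sigma> \<tau> assume s: "\<sigma> \<in> power_complex K n" and t: "\<tau> \<subseteq> \<sigma> \<and> \<tau> \<noteq> {}"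
  have h: "finite \<sigma>" "\<forall>x\<in>\<sigma>. length x = n" "\<forall>i<n. (\<lambda>x. x ! i) ` \<sigma> \<in> K"
    using s unfolding power_complex_def by auto
  have "(\<lambda>x. x ! i) ` \<tau> \<in> K" if "i < n" for i
  proof (rule sc_face[OF K])
    show "(\<lambda>x. x ! i) ` \<sigma> \<in> K" using h that by blast
    show "(\<lambda>x. x ! i) ` \<tau> \<subseteq> (\<lambda>x. x ! i) ` \<sigma>" using t by (rule image_mono[OF conjunct1])
    show "(\<lambda>x. x ! i) ` \<tau> \<noteq> {}" using t by simp
  qed
  moreover have "finite \<tau>" using t h(1) finite_subset by blast
  moreover have "\<forall>x\<in>\<tau>. length x = n" using t h(2) by blast
  ultimately show "\<tau> \<in> power_complex K n" using t unfolding power_complex_def by blast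
qed

lemma power_finite:
  assumes "finite K" "simplicial_complex K"
  shows "finite (power_complex K n)"
proof -
  have "\<forall>M\<in>K. finite M" using assms(2) unfolding simplicial_complex_def by blast
  then have fv: "finite (vertices K)" unfolding vertices_def using assms(1) by blast
  have "power_complex K n \<subseteq> Pow {xs. set xs \<subseteq> vertices K \<and> length xs = n}"
  proof
    fix \<sigma> assume "\<sigma> \<in> power_complex K n"
    then have h: "\<forall>x\<in>\<sigma>. length x = n" "\<forall>i<n. (\<lambda>x. x ! i) ` \<sigma> \<in> K" unfolding power_complex_def by auto
    have "set x \<subseteq> vertices K" if "x \<in> \<sigma>" for x
    proof
      fix a assume "a \<in> set x"
      then obtain i where "i < length x" "x ! i = a" by (auto simp: in_set_conv_nth)
      moreover have "length x = n" using h(1) that by blast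
      ultimately have "i < n" "x ! i = a" by simp_all
      then have "a \<in> (\<lambda>x. x ! i) ` \<sigma>" using that by blast
      moreover have "(\<lambda>x. x ! i) ` \<sigma> \<in> K" using h(2) \<open>i < n\<close> by blast
      ultimately show "a \<in> vertices K" unfolding vertices_def by blast
    qed
    then show "\<sigma> \<in> Pow {xs. set xs \<subseteq> vertices K \<and> length xs = n}" using h(1) by auto
  qed
  moreover have "finite {xs. set xs \<subseteq> vertices K \<and> length xs = n}"
    using finite_lists_length_eq[OF fv] by simp
  ultimately show ?thesis by (rule finite_subset[OF _ iffD2[OF finite_Pow_iff]])
qed

lemma proj_simp: "i < n \<Longrightarrow> simplicial_map (power_complex K n) K (\<lambda>x. x ! i)"
  unfolding simplicial_map_def power_complex_def by auto

lemma TC_wit: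
  assumes "complex K" "finite K"
  shows "\<exists>C. cover_ok (power_complex K n) K (map (\<lambda>i x. x ! i) [0..<n]) (TC n K) C"
  unfolding TC_def
proof (rule SD_wit, rule cover_exists)
  show "simplicial_complex (power_complex K n)" using assms power_sc unfolding complex_def by blast
  show "finite (power_complex K n)" using assms power_finite unfolding complex_def by blast
  show "complex K" by fact
  show "\<forall>f\<in>set (map (\<lambda>i x. x ! i) [0..<n]). simplicial_map (power_complex K n) K f"
    using proj_simp by auto
qed

theorem theorem5p3:
  fixes L :: "'a set set" and N :: "'b set set" and \<phi> :: "'a \<Rightarrow> 'b" and n :: nat
  assumes "complex L" and "complex N" and "finite L" and "finite N"
    and "simplicial_map L N \<phi>" and "\<phi> ` vertices L = vertices N"
    and "finite_fibration L N \<phi>"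
    and "n \<ge> 2"
  shows "TC_map n L N \<phi> \<le> min (TC n L) (TC n N)"
proof -
  have A: "TC_map n L N \<phi> \<le> TC n L"
  proof -
    obtain C where C: "cover_ok (power_complex L n) L (map (\<lambda>i x. x ! i) [0..<n]) (TC n L) C"
      using TC_wit[OF assms(1,3)] by blast
    have cc: "contiguity_class (C j) N (\<lambda>x. \<phi> (x ! i)) (\<lambda>x. \<phi> (x ! l))"
      if "j \<le> TC n L" "i < n" "l < n" for j i l
    proof -
      have "contiguity_class (C j) L (\<lambda>x. x ! i) (\<lambda>x. x ! l)"
        using C that unfolding cover_ok_def by simp
      from comp_left_cc[OF this assms(5)] show ?thesis by (simp add: comp_def)
    qed
    have "cover_ok (power_complex L n) N (map (\<lambda>i x. \<phi> (x ! i)) [0..<n]) (TC n L) C"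
      using C cc unfolding cover_ok_def by simp
    then show ?thesis unfolding TC_map_def by (rule SD_le)
  qed
  have B: "TC_map n L N \<phi> \<le> TC n N"
  proof -
    obtain C where C: "cover_ok (power_complex N n) N (map (\<lambda>i x. x ! i) [0..<n]) (TC n N) C"
      using TC_wit[OF assms(2,4)] by blast
    define C' where "C' j = {\<sigma> \<in> power_complex L n. map \<phi> ` \<sigma> \<in> C j}" for j
    have mapP: "map \<phi> ` \<sigma> \<in> power_complex N n" if "\<sigma> \<in> power_complex L n" for \<sigma>
    proof -
      have "(\<lambda>x. x ! i) ` map \<phi> ` \<sigma> = \<phi> ` (\<lambda>x. x ! i) ` \<sigma>" if "i < n" "\<forall>x\<in>\<sigma>. length x = n" for i
        using that by (force simp: image_image)
      then show ?thesis using that assms(5) unfolding power_complex_def simplicial_map_def by auto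
    qed
    have ok: "cover_ok (power_complex L n) N (map (\<lambda>i x. \<phi> (x ! i)) [0..<n]) (TC n N) C'"
      unfolding cover_ok_def
    proof (intro conjI allI impI)
      fix j assume j: "j \<le> TC n N"
      have scj: "simplicial_complex (C j)" using C j unfolding cover_ok_def subcomplex_def by blast
      have "simplicial_complex (C' j)"
        unfolding simplicial_complex_def
      proof (intro conjI ballI allI impI)
        fix \<sigma> assume "\<sigma> \<in> C' j"
        then show "finite \<sigma>" "\<sigma> \<noteq> {}" unfolding C'_def power_complex_def by auto
      next
        fix \<sigma> \<tau> assume s: "\<sigma> \<in> C' j" and t: "\<tau> \<subseteq> \<sigma> \<and> \<tau> \<noteq> {}"
        have pl: "simplicial_complex (power_complex L n)" using power_sc assms(1) unfolding complex_def by blast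
        have s': "\<sigma> \<in> power_complex L n" "map \<phi> ` \<sigma> \<in> C j" using s unfolding C'_def by auto
        have "\<tau> \<in> power_complex L n"
          using sc_face[OF pl s'(1)] t by blast
        moreover have "map \<phi> ` \<tau> \<subseteq> map \<phi> ` \<sigma>" "map \<phi> ` \<tau> \<noteq> {}" using t by auto
        ultimately show "\<tau> \<in> C' j"
          using sc_face[OF scj s'(2)] unfolding C'_def by blast
      qed
      then show "subcomplex (C' j) (power_complex L n)" unfolding subcomplex_def C'_def by auto
    next
      show "(\<Union>j\<le>TC n N. C' j) = power_complex L n"
      proof
        show "(\<Union>j\<le>TC n N. C' j) \<subseteq> power_complex L n" unfolding C'_def by auto
      next
        show "power_complex L n \<subseteq> (\<Union>j\<le>TC n N. C' j)"
        proof
          fix \<sigma> assume s: "\<sigma> \<in> power_complex L n"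
          then have "map \<phi> ` \<sigma> \<in> (\<Union>j\<le>TC n N. C j)" using mapP C unfolding cover_ok_def by simp
          then show "\<sigma> \<in> (\<Union>j\<le>TC n N. C' j)" using s unfolding C'_def by auto
        qed
      qed
    next
      fix j i l assume j: "j \<le> TC n N" and i: "i < length (map (\<lambda>i x. \<phi> (x ! i)) [0..<n])"
        and l: "l < length (map (\<lambda>i x. \<phi> (x ! i)) [0..<n])"
      have i': "i < n" and l': "l < n" using i l by auto
      have cc: "contiguity_class (C j) N (\<lambda>x. x ! i) (\<lambda>x. x ! l)"
        using C j i' l' unfolding cover_ok_def by auto
      have sm: "simplicial_map (C' j) (C j) (map \<phi>)" unfolding simplicial_map_def C'_def by auto
      have len: "\<forall>v\<in>vertices (C' j). length v = n"
        unfolding vertices_def C'_def power_complex_def by auto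
      have "contiguity_class (C' j) N (\<lambda>x. \<phi> (x ! i)) (\<lambda>x. \<phi> (x ! l))"
        by (rule comp_right_cc[OF cc sm]) (use len i' l' in auto)
      then show "contiguity_class (C' j) N (map (\<lambda>i x. \<phi> (x ! i)) [0..<n] ! i) (map (\<lambda>i x. \<phi> (x ! i)) [0..<n] ! l)"
        using i' l' by simp
    qed
    then show ?thesis unfolding TC_map_def by (rule SD_le)
  qed
  show ?thesis using A B by simp
qed

end
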